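(* Let $\lambda$ be a partition of $k$ and $\lambda'$ a partition of $k'$. Then every $S_\lambda$-$k$-colourable graph is $S_{\lambda'}$-$k'$-colourable if and only if $\lambda\le\lambda'$.
   Context: View a graph $G$ as a symmetric digraph: each edge $uv$ gives arcs $e=(u,v)$ and $e^{-1}=(v,u)$. For an inverse-closed set $S$ of permutations, an $S$-signature of $G$ is a map $\sigma$ from arcs to $S$ with $\sigma(e^{-1})=\sigma(e)^{-1}$. A $k$-colouring of $(G,\sigma)$ is a map $f:V(G)\to[k]$ with $\sigma(e)(f(x))\ne f(y)$ for every arc $e=(x,y)$; $G$ is $S$-$k$-colourable if $(G,\sigma)$ is $k$-colourable for every $S$-signature $\sigma$. For a partition $\lambda=\{k_1,\dots,k_q\}$ of $k$, let $s_0=0$, $s_j=s_{j-1}+k_j$, $I_j=\{s_{j-1}+1,\dots,s_j\}$, and let $S_\lambda$ be the set of permutations $\pi$ of $[k]$ with $\pi(I_j)=I_j$ for all $j$. A partition $\lambda'$ is a refinement of $\lambda$ if it is obtained from $\lambda$ by replacing some parts $k_i$ by multisets of positive integers summing to $k_i$. For $\lambda$ a partition of $k$ and $\lambda'$ a partition of $k'\ge k$, write $\lambda\le\lambda'$ if there is a partition $\lambda''$ of $k'$ obtained from $\lambda$ by increasing some of its parts such that $\lambda'$ is a refinement of $\lambda''$. *)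

theory Defs
  imports Main "HOL-Combinatorics.Permutations" "HOL-Library.Multiset"
begin

text \<open>Finite simple graphs with vertices in nat, viewed as symmetric digraphs:
  the arc set E is a symmetric irreflexive relation on the finite vertex set V.\<close>
definition finite_graph :: "nat set \<Rightarrow> (nat \<times> nat) set \<Rightarrow> bool" where
  "finite_graph V E \<longleftrightarrow> finite V \<and> E \<subseteq> V \<times> V \<and>
     (\<forall>u v. (u, v) \<in> E \<longrightarrow> (v, u) \<in> E) \<and> (\<forall>v. (v, v) \<notin> E)"

definition signature :: "(nat \<Rightarrow> nat) set \<Rightarrow> (nat \<times> nat) set \<Rightarrow> (nat \<times> nat \<Rightarrow> nat \<Rightarrow> nat) \<Rightarrow> bool" where
  "signature S E \<sigma> \<longleftrightarrow> (\<forall>e\<in>E. \<sigma> e \<in> S \<and> \<sigma> (snd e, fst e) = inv (\<sigma> e))"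

definition colouring :: "nat \<Rightarrow> nat set \<Rightarrow> (nat \<times> nat) set \<Rightarrow> (nat \<times> nat \<Rightarrow> nat \<Rightarrow> nat) \<Rightarrow> (nat \<Rightarrow> nat) \<Rightarrow> bool" where
  "colouring k V E \<sigma> f \<longleftrightarrow> (\<forall>v\<in>V. f v \<in> {1..k}) \<and>
     (\<forall>x y. (x, y) \<in> E \<longrightarrow> \<sigma> (x, y) (f x) \<noteq> f y)"

definition S_colourable :: "(nat \<Rightarrow> nat) set \<Rightarrow> nat \<Rightarrow> nat set \<Rightarrow> (nat \<times> nat) set \<Rightarrow> bool" where
  "S_colourable S k V E \<longleftrightarrow> (\<forall>\<sigma>. signature S E \<sigma> \<longrightarrow> (\<exists>f. colouring k V E \<sigma> f))"

definition is_partition :: "nat \<Rightarrow> nat list \<Rightarrow> bool" where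
  "is_partition k lam \<longleftrightarrow> (\<forall>x\<in>set lam. 0 < x) \<and> sum_list lam = k"

text \<open>The block I_(j+1) (0-indexed j) = {s_j + 1 .. s_(j+1)}.\<close>
definition block :: "nat list \<Rightarrow> nat \<Rightarrow> nat set" where
  "block lam j = {sum_list (take j lam) + 1 .. sum_list (take (Suc j) lam)}"

definition S_lambda :: "nat \<Rightarrow> nat list \<Rightarrow> (nat \<Rightarrow> nat) set" where
  "S_lambda k lam = {\<pi>. \<pi> permutes {1..k} \<and> (\<forall>j<length lam. \<pi> ` block lam j = block lam j)}"

text \<open>lam' is a refinement of lam: each part of lam is replaced by a nonempty multiset
  of positive integers summing to it (a part kept unchanged is replaced by itself).\<close>
definition refines :: "nat list \<Rightarrow> nat list \<Rightarrow> bool" where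
  "refines lam' lam \<longleftrightarrow> (\<exists>M :: nat multiset multiset.
     mset lam = image_mset sum_mset M \<and>
     (\<forall>A\<in>#M. A \<noteq> {#} \<and> (\<forall>x\<in>#A. 0 < x)) \<and>
     mset lam' = sum_mset M)"

definition partition_le :: "nat \<Rightarrow> nat list \<Rightarrow> nat \<Rightarrow> nat list \<Rightarrow> bool" where
  "partition_le k lam k' lam' \<longleftrightarrow> k \<le> k' \<and>
     (\<exists>lam''. length lam'' = length lam \<and> (\<forall>i<length lam. lam ! i \<le> lam'' ! i) \<and>
        is_partition k' lam'' \<and> refines lam' lam'')"

end

theory Submission
  imports Defs "HOL-Combinatorics.List_Permutation" "HOL-Library.Countable"
begin

lemma sum_take_mono: "i \<le> j \<Longrightarrow> sum_list (take i (l::nat list)) \<le> sum_list (take j l)"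
proof -
  assume "i \<le> j"
  then have "take j l = take i l @ take (j - i) (drop i l)"
    by (metis le_add_diff_inverse take_add)
  then show ?thesis by simp
qed

lemma sum_take_Suc: "i < length l \<Longrightarrow> sum_list (take (Suc i) (l::nat list)) = sum_list (take i l) + l ! i"
  by (simp add: take_Suc_conv_app_nth)

lemma block_disj: "i \<noteq> j \<Longrightarrow> block l i \<inter> block l j = {}"
proof -
  have A: "i < j \<Longrightarrow> block l i \<inter> block l j = {}" for i j
    using sum_take_mono[of "Suc i" j l] by (auto simp: block_def)
  assume "i \<noteq> j" then show ?thesis using A[of i j] A[of j i] by (cases "i < j") auto
qed

lemma block_card: "i < length l \<Longrightarrow> card (block l i) = l ! i"
  by (simp add: block_def sum_take_Suc)

lemma block_sub: "i < length l \<Longrightarrow> block l i \<subseteq> {1..sum_list l}"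
  using sum_take_mono[of "Suc i" "length l" l] by (auto simp: block_def)

lemma block_cover: "c \<in> {1..sum_list l} \<Longrightarrow> \<exists>i<length l. c \<in> block l i"
proof (induction l rule: rev_induct)
  case Nil then show ?case by simp
next
  case (snoc x xs)
  show ?case
  proof (cases "c \<le> sum_list xs")
    case True
    with snoc obtain i where "i < length xs" "c \<in> block xs i" by auto
    then show ?thesis by (intro exI[of _ i]) (auto simp: block_def)
  next
    case False
    then show ?thesis using snoc.prems
      by (intro exI[of _ "length xs"]) (auto simp: block_def)
  qed
qed

lemma finite_block[simp]: "finite (block l i)" by (simp add: block_def)

definition bidx :: "nat list \<Rightarrow> nat \<Rightarrow> nat" where
  "bidx l c = (THE i. i < length l \<and> c \<in> block l i)"

lemma bidx: assumes "c \<in> {1..sum_list l}" shows "bidx l c < length l" "c \<in> block l (bidx l c)"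
proof -
  obtain i where i: "i < length l" "c \<in> block l i" using block_cover[OF assms] by blast
  have "bidx l c = i" unfolding bidx_def
    by (rule the_equality) (use i block_disj in blast)+
  then show "bidx l c < length l" "c \<in> block l (bidx l c)" using i by auto
qed

lemma bidx_eq: "i < length l \<Longrightarrow> c \<in> block l i \<Longrightarrow> bidx l c = i"
  unfolding bidx_def by (rule the_equality) (use block_disj in blast)+


lemma reindex_perm_sum:
  assumes "bij_betw \<pi> {..<n} {..<m}" "\<forall>i<n. ys ! i = zs ! (\<pi> i)"
  shows "(\<Sum>b | b < n \<and> h0 (\<pi> b) = j. (ys ! b :: nat)) = (\<Sum>c | c < m \<and> h0 c = j. zs ! c)"
proof -
  have "bij_betw \<pi> {b. b < n \<and> h0 (\<pi> b) = j} {c. c < m \<and> h0 c = j}"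
    using assms(1) unfolding bij_betw_def inj_on_def by (auto simp: image_iff lessThan_def)
  then have "(\<Sum>b | b < n \<and> h0 (\<pi> b) = j. zs ! (\<pi> b)) = (\<Sum>c | c < m \<and> h0 c = j. zs ! c)"
    by (rule sum.reindex_bij_betw)
  then show ?thesis using assms(2) by (metis (no_types, lifting) mem_Collect_eq sum.cong)
qed

lemma refine_h:
  "mset xs = image_mset sum_mset M \<Longrightarrow> mset ys = sum_mset M \<Longrightarrow>
   \<exists>h. (\<forall>b<length ys. h b < length xs) \<and>
       (\<forall>j<length xs. (\<Sum>b | b<length ys \<and> h b = j. ys!b) = (xs!j :: nat))"
proof (induction xs arbitrary: M ys)
  case Nil
  then have "M = {#}" by simp
  with Nil have "ys = []" by simp
  then show ?case by simp
next
  case (Cons x xs')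
  have "image_mset sum_mset M = {#x#} + mset xs'" using Cons.prems(1) by simp
  from image_mset_eq_plusD[OF this] obtain B C where
    BC: "M = B + C" "{#x#} = image_mset sum_mset B" "mset xs' = image_mset sum_mset C" by metis
  from BC(2) obtain A where A: "B = {#A#}" "sum_mset A = x"
  proof -
    have "size B = 1" using BC(2) by (metis size_image_mset size_single)
    then obtain A where "B = {#A#}" by (metis size_1_singleton_mset)
    then show ?thesis using BC(2) that by simp
  qed
  obtain ys1 where ys1: "mset ys1 = A" using ex_mset by blast
  obtain ys2 where ys2: "mset ys2 = sum_mset C" using ex_mset by blast
  obtain h' where h': "\<forall>b<length ys2. h' b < length xs'"
     "\<forall>j<length xs'. (\<Sum>b | b<length ys2 \<and> h' b = j. ys2!b) = xs'!j"
    using Cons.IH[OF BC(3) ys2] by blast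
  define zs where "zs = ys1 @ ys2"
  define h0 where "h0 b = (if b < length ys1 then 0 else Suc (h' (b - length ys1)))" for b
  have "mset ys = mset zs" using Cons.prems(2) BC A ys1 ys2 by (simp add: zs_def)
  from permutation_Ex_bij[OF this] obtain \<pi> where
    pi: "bij_betw \<pi> {..<length ys} {..<length zs}" "\<forall>i<length ys. ys ! i = zs ! (\<pi> i)" by blast
  have lz: "length zs = length ys" using \<open>mset ys = mset zs\<close> by (metis mset_eq_length)
  show ?case
  proof (intro exI[of _ "h0 \<circ> \<pi>"] conjI allI impI)
    fix b assume "b < length ys"
    then have "\<pi> b < length zs" using pi(1) by (auto simp: bij_betw_def)
    then show "(h0 \<circ> \<pi>) b < length (x # xs')" using h' by (auto simp: h0_def zs_def)
  next
    fix j assume j: "j < length (x # xs')"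
    have "(\<Sum>b | b < length ys \<and> (h0 \<circ> \<pi>) b = j. ys ! b) = (\<Sum>c | c < length zs \<and> h0 c = j. zs ! c)"
      using reindex_perm_sum[OF pi] by simp
    also have "\<dots> = (x # xs') ! j"
    proof (cases j)
      case 0
      have "{c. c < length zs \<and> h0 c = j} = {..<length ys1}" using 0 by (auto simp: h0_def zs_def)
      then have "(\<Sum>c | c < length zs \<and> h0 c = j. zs ! c) = (\<Sum>c<length ys1. ys1 ! c)"
        by (simp add: zs_def nth_append)
      also have "\<dots> = sum_list ys1" by (simp add: sum_list_sum_nth lessThan_atLeast0)
      also have "\<dots> = x" using ys1 A by (metis sum_mset_sum_list)
      finally show ?thesis using 0 by simp
    next
      case (Suc j')
      have S: "{c. c < length zs \<and> h0 c = j} = (\<lambda>b. b + length ys1) ` {b. b < length ys2 \<and> h' b = j'}"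
      proof (rule set_eqI, rule iffI)
        fix c assume "c \<in> {c. c < length zs \<and> h0 c = j}"
        then have c: "c < length zs" "\<not> c < length ys1" "h' (c - length ys1) = j'"
          using Suc by (auto simp: h0_def split: if_splits)
        then have "c - length ys1 < length ys2" "c = (c - length ys1) + length ys1" by (auto simp: zs_def)
        then show "c \<in> (\<lambda>b. b + length ys1) ` {b. b < length ys2 \<and> h' b = j'}"
          using c by (metis (mono_tags, lifting) image_eqI mem_Collect_eq)
      qed (auto simp: h0_def zs_def Suc)
      have "(\<Sum>c | c < length zs \<and> h0 c = j. zs ! c) = (\<Sum>b | b < length ys2 \<and> h' b = j'. zs ! (b + length ys1))"
        unfolding S by (subst sum.reindex) (auto simp: inj_on_def)
      also have "\<dots> = (\<Sum>b | b < length ys2 \<and> h' b = j'. ys2 ! b)" by (simp add: zs_def nth_append)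
      also have "\<dots> = xs' ! j'" using h'(2) j Suc by simp
      finally show ?thesis using Suc by simp
    qed
    finally show "(\<Sum>b | b < length ys \<and> (h0 \<circ> \<pi>) b = j. ys ! b) = (x # xs') ! j" .
  qed
qed


definition goodh :: "nat list \<Rightarrow> nat list \<Rightarrow> (nat \<Rightarrow> nat) \<Rightarrow> bool" where
  "goodh lam lp h \<longleftrightarrow> (\<forall>b<length lp. h b < length lam) \<and>
     (\<forall>j<length lam. lam ! j \<le> (\<Sum>b | b < length lp \<and> h b = j. lp ! b))"

lemma le_imp_goodh: "partition_le k lam k' lp \<Longrightarrow> \<exists>h. goodh lam lp h"
proof -
  assume "partition_le k lam k' lp"
  then obtain l2 M where l2: "length l2 = length lam" "\<forall>i<length lam. lam ! i \<le> l2 ! i"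
    "mset l2 = image_mset sum_mset M" "mset lp = sum_mset M"
    unfolding partition_le_def refines_def by blast
  from refine_h[OF l2(3,4)] obtain h where
    "\<forall>b<length lp. h b < length l2" "\<forall>j<length l2. (\<Sum>b | b<length lp \<and> h b = j. lp!b) = l2!j" by blast
  then show ?thesis using l2(1,2) unfolding goodh_def by (intro exI[of _ h]) auto
qed

lemma group_sum:
  assumes "\<forall>b<p. h b < (q::nat)"
  shows "(\<Sum>j<q. (\<Sum>b | b < p \<and> h b = j. f b)) = (\<Sum>b<(p::nat). (f b :: 'a::comm_monoid_add))"
proof -
  have "(\<Sum>j<q. sum f {x. x \<in> {..<p} \<and> h x = j}) = sum f {..<p}"
    using assms by (intro sum.group) auto
  then show ?thesis by simp
qed

lemma mset_filter_group:
  "\<forall>b\<in>set xs. h b < q \<Longrightarrow> (\<Sum>j\<leftarrow>[0..<q]. mset (map g (filter (\<lambda>b. h b = j) xs))) = mset (map g xs)"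
proof (induction xs)
  case Nil then show ?case by (induction q) auto
next
  case (Cons a xs)
  have "(\<Sum>j\<leftarrow>[0..<q]. mset (map g (filter (\<lambda>b. h b = j) (a # xs)))) =
        (\<Sum>j\<leftarrow>[0..<q]. (if h a = j then {#g a#} else {#}) + mset (map g (filter (\<lambda>b. h b = j) xs)))"
    by (rule arg_cong[where f=sum_list], rule map_cong) auto
  also have "\<dots> = (\<Sum>j\<leftarrow>[0..<q]. (if h a = j then {#g a#} else {#})) + (\<Sum>j\<leftarrow>[0..<q]. mset (map g (filter (\<lambda>b. h b = j) xs)))"
    by (simp add: sum_list_addf)
  also have "(\<Sum>j\<leftarrow>[0..<q]. (if h a = j then {#g a#} else {#})) = {#g a#}"
  proof -
    have "(\<Sum>j\<leftarrow>[0..<q]. (if h a = j then {#g a#} else {#})) = (\<Sum>j\<in>{0..<q}. (if h a = j then {#g a#} else {#}))"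
      by (simp add: sum_set_upt_conv_sum_list_nat[symmetric])
    also have "\<dots> = {#g a#}" using Cons.prems by (simp add: sum.delta)
    finally show ?thesis .
  qed
  finally show ?case using Cons by simp
qed

lemma goodh_imp_le:
  assumes P: "is_partition k lam" "is_partition k' lp" and G: "goodh lam lp h"
  shows "partition_le k lam k' lp"
proof -
  define q where "q = length lam"
  define p where "p = length lp"
  define gs where "gs j = (\<Sum>b | b < p \<and> h b = j. lp ! b)" for j
  define l2 where "l2 = map gs [0..<q]"
  have hb: "\<forall>b<p. h b < q" using G by (simp add: goodh_def p_def q_def)
  have le: "\<forall>j<q. lam ! j \<le> gs j" using G by (simp add: goodh_def p_def q_def gs_def)
  have sl2: "sum_list l2 = k'"
  proof -
    have "sum_list l2 = (\<Sum>j<q. gs j)" by (simp add: l2_def sum_set_upt_conv_sum_list_nat[symmetric] atLeast0LessThan)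
    also have "\<dots> = (\<Sum>b<p. lp ! b)" unfolding gs_def by (rule group_sum[OF hb])
    also have "\<dots> = k'" using P(2) by (simp add: is_partition_def p_def sum_list_sum_nth atLeast0LessThan)
    finally show ?thesis .
  qed
  have "k \<le> k'"
  proof -
    have "k = (\<Sum>j<q. lam ! j)" using P(1) by (simp add: is_partition_def q_def sum_list_sum_nth atLeast0LessThan)
    also have "\<dots> \<le> (\<Sum>j<q. gs j)" using le by (intro sum_mono) auto
    also have "\<dots> = k'" using sl2 by (simp add: l2_def sum_set_upt_conv_sum_list_nat[symmetric] atLeast0LessThan)
    finally show ?thesis .
  qed
  have pos: "\<forall>j<q. 0 < gs j" using le P(1) by (auto simp: is_partition_def q_def) (metis nth_mem order_less_le_trans)
  define A where "A j = mset (map (nth lp) (filter (\<lambda>b. h b = j) [0..<p]))" for j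
  define M where "M = mset (map A [0..<q])"
  have sA: "sum_mset (A j) = gs j" for j
  proof -
    have "sum_mset (A j) = sum_list (map (nth lp) (filter (\<lambda>b. h b = j) [0..<p]))"
      by (simp only: A_def sum_mset_sum_list)
    also have "\<dots> = sum (nth lp) (set (filter (\<lambda>b. h b = j) [0..<p]))"
      by (simp add: sum_list_distinct_conv_sum_set)
    also have "set (filter (\<lambda>b. h b = j) [0..<p]) = {b. b < p \<and> h b = j}" by auto
    finally show ?thesis by (simp add: gs_def)
  qed
  have ref: "refines lp l2" unfolding refines_def
  proof (intro exI[of _ M] conjI ballI)
    have "map sum_mset (map A [0..<q]) = map gs [0..<q]" by (simp add: sA)
    then show "mset l2 = image_mset sum_mset M" unfolding M_def l2_def by (metis mset_map)
  next
    fix X assume "X \<in># M"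
    then obtain j where j: "j < q" "X = A j" by (auto simp: M_def)
    then show "X \<noteq> {#}" using pos sA by (metis less_irrefl sum_mset.empty)
  next
    fix X x assume "X \<in># M" "x \<in># X"
    then show "0 < x" using P(2) by (auto simp: M_def A_def is_partition_def p_def)
  next
    have "sum_mset M = (\<Sum>j\<leftarrow>[0..<q]. A j)" unfolding M_def by (rule sum_mset_sum_list)
    also have "\<dots> = mset (map (nth lp) [0..<p])" unfolding A_def
      by (rule mset_filter_group) (use hb in auto)
    also have "\<dots> = mset lp" by (simp add: p_def map_nth)
    finally show "mset lp = sum_mset M" by simp
  qed
  have "is_partition k' l2" using sl2 pos by (auto simp: is_partition_def l2_def)
  then show ?thesis unfolding partition_le_def
    using \<open>k \<le> k'\<close> ref le by (intro conjI exI[of _ l2]) (auto simp: l2_def q_def)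
qed


lemma perm_extend:
  assumes "finite I" "D \<subseteq> I" "inj_on g D" "g ` D \<subseteq> I"
  shows "\<exists>\<pi>. \<pi> permutes I \<and> (\<forall>c\<in>D. \<pi> c = g c)"
proof -
  have "card (I - D) = card (I - g ` D)"
    using assms by (simp add: card_Diff_subset finite_subset card_image)
  then obtain f where f: "bij_betw f (I - D) (I - g ` D)"
    using finite_same_card_bij assms(1) by blast
  define \<pi> where "\<pi> x = (if x \<in> D then g x else if x \<in> I then f x else x)" for x
  have img: "\<pi> ` I \<subseteq> I" using f assms by (auto simp: \<pi>_def bij_betw_def)
  have inj: "inj_on \<pi> I"
  proof (rule inj_onI)
    fix x y assume xy: "x \<in> I" "y \<in> I" "\<pi> x = \<pi> y"
    show "x = y"
    proof (cases "x \<in> D"; cases "y \<in> D")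
      assume "x \<in> D" "y \<in> D" then show ?thesis using xy assms(3) by (auto simp: \<pi>_def inj_on_def)
    next
      assume "x \<notin> D" "y \<notin> D" then show ?thesis using xy f by (auto simp: \<pi>_def bij_betw_def inj_on_def)
    next
      assume "x \<in> D" "y \<notin> D"
      then have "f y \<in> I - g ` D" using f xy by (auto simp: bij_betw_def)
      moreover have "\<pi> x \<in> g ` D" using \<open>x \<in> D\<close> by (simp add: \<pi>_def)
      moreover have "\<pi> y = f y" using \<open>y \<notin> D\<close> xy(2) by (simp add: \<pi>_def)
      ultimately show ?thesis using xy(3) by (metis DiffD2)
    next
      assume "x \<notin> D" "y \<in> D"
      then have "f x \<in> I - g ` D" using f xy by (auto simp: bij_betw_def)
      moreover have "\<pi> y \<in> g ` D" using \<open>y \<in> D\<close> by (simp add: \<pi>_def)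
      moreover have "\<pi> x = f x" using \<open>x \<notin> D\<close> xy(1) by (simp add: \<pi>_def)
      ultimately show ?thesis using xy(3) by (metis DiffD2)
    qed
  qed
  have "bij_betw \<pi> I I" using endo_inj_surj[OF assms(1) img inj] inj by (simp add: bij_betw_def)
  then have "\<pi> permutes I" by (rule bij_imp_permutes) (auto simp: \<pi>_def dest: subsetD[OF assms(2)])
  then show ?thesis by (auto simp: \<pi>_def)
qed

lemma glue:
  fixes lam :: "nat list"
  assumes "\<forall>j<length lam. \<pi>s j permutes block lam j"
  defines "\<pi> \<equiv> (\<lambda>c. if c \<in> {1..sum_list lam} then \<pi>s (bidx lam c) c else c)"
  shows "\<pi> \<in> S_lambda (sum_list lam) lam" "\<forall>j<length lam. \<forall>c\<in>block lam j. \<pi> c = \<pi>s j c"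
proof -
  show eq: "\<forall>j<length lam. \<forall>c\<in>block lam j. \<pi> c = \<pi>s j c"
  proof (intro allI impI ballI)
    fix j c assume "j < length lam" "c \<in> block lam j"
    moreover then have "c \<in> {1..sum_list lam}" using block_sub[of j lam] by auto
    ultimately show "\<pi> c = \<pi>s j c" using bidx_eq[of j lam c] by (simp add: \<pi>_def)
  qed
  have inb: "\<pi> c \<in> block lam (bidx lam c)" if "c \<in> {1..sum_list lam}" for c
  proof -
    have "bidx lam c < length lam" "c \<in> block lam (bidx lam c)" using bidx[OF that] by auto
    then have "\<pi>s (bidx lam c) c \<in> block lam (bidx lam c)" using assms(1) permutes_in_image by metis
    then show ?thesis using that by (simp add: \<pi>_def)
  qed
  have img: "\<pi> ` {1..sum_list lam} \<subseteq> {1..sum_list lam}"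
  proof
    fix y assume "y \<in> \<pi> ` {1..sum_list lam}"
    then obtain c where c: "c \<in> {1..sum_list lam}" "y = \<pi> c" by auto
    show "y \<in> {1..sum_list lam}" using inb[OF c(1)] block_sub[OF bidx(1)[OF c(1)]] c(2) by auto
  qed
  have inj: "inj_on \<pi> {1..sum_list lam}"
  proof (rule inj_onI)
    fix x y assume xy: "x \<in> {1..sum_list lam}" "y \<in> {1..sum_list lam}" "\<pi> x = \<pi> y"
    have "bidx lam x = bidx lam y" using inb[OF xy(1)] inb[OF xy(2)] xy(3) block_disj[of "bidx lam x" "bidx lam y" lam] by auto
    moreover have "\<pi>s (bidx lam x) x = \<pi>s (bidx lam y) y" using xy by (simp add: \<pi>_def)
    ultimately show "x = y" using assms(1) bidx(1)[OF xy(1)] by (metis permutes_inj injD)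
  qed
  have "bij_betw \<pi> {1..sum_list lam} {1..sum_list lam}"
    using endo_inj_surj[OF finite_atLeastAtMost img inj] inj by (simp add: bij_betw_def)
  then have P: "\<pi> permutes {1..sum_list lam}" by (rule bij_imp_permutes) (auto simp: \<pi>_def)
  have "\<pi> ` block lam j = block lam j" if "j < length lam" for j
  proof -
    have "\<pi> ` block lam j = \<pi>s j ` block lam j" by (rule image_cong[OF refl]) (use eq that in blast)
    also have "\<dots> = block lam j" using assms(1) that permutes_image by metis
    finally show ?thesis .
  qed
  then show "\<pi> \<in> S_lambda (sum_list lam) lam" using P by (simp add: S_lambda_def)
qed

lemma transfer_graph:
  assumes S: "\<forall>\<pi>\<in>S. \<pi> permutes {1..k}" and S': "\<forall>\<pi>\<in>S'. \<pi> permutes {1..k'}"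
    and Sinv: "\<forall>\<pi>\<in>S. inv \<pi> \<in> S"
    and psi: "\<psi> ` {1..k} \<subseteq> {1..k'}"
    and CP: "\<forall>\<pi>'\<in>S'. \<exists>\<pi>\<in>S. \<forall>c\<in>{1..k}. \<forall>d\<in>{1..k}. \<pi>' (\<psi> c) = \<psi> d \<longrightarrow> \<pi> c = d"
    and G: "finite_graph V E" and col: "S_colourable S k V E"
  shows "S_colourable S' k' V E"
  unfolding S_colourable_def
proof (intro allI impI)
  fix \<sigma>' assume sig': "signature S' E \<sigma>'"
  define gg where "gg \<pi>' = (SOME \<pi>. \<pi> \<in> S \<and> (\<forall>c\<in>{1..k}. \<forall>d\<in>{1..k}. \<pi>' (\<psi> c) = \<psi> d \<longrightarrow> \<pi> c = d))" for \<pi>'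
  have gg: "gg \<pi>' \<in> S" "\<forall>c\<in>{1..k}. \<forall>d\<in>{1..k}. \<pi>' (\<psi> c) = \<psi> d \<longrightarrow> gg \<pi>' c = d" if "\<pi>' \<in> S'" for \<pi>'
  proof -
    have "\<exists>\<pi>. \<pi> \<in> S \<and> (\<forall>c\<in>{1..k}. \<forall>d\<in>{1..k}. \<pi>' (\<psi> c) = \<psi> d \<longrightarrow> \<pi> c = d)"
      using CP that by (simp only: Bex_def)
    from someI_ex[OF this] show "gg \<pi>' \<in> S" "\<forall>c\<in>{1..k}. \<forall>d\<in>{1..k}. \<pi>' (\<psi> c) = \<psi> d \<longrightarrow> gg \<pi>' c = d"
      unfolding gg_def by simp_all
  qed
  define \<sigma> where "\<sigma> e = (if fst e < snd e then gg (\<sigma>' e) else inv (gg (\<sigma>' (snd e, fst e))))" for e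
  have irr: "\<And>x y. (x, y) \<in> E \<Longrightarrow> x \<noteq> y" and sym: "\<And>x y. (x, y) \<in> E \<Longrightarrow> (y, x) \<in> E"
    and EV: "\<And>x y. (x, y) \<in> E \<Longrightarrow> x \<in> V \<and> y \<in> V"
    using G by (auto simp: finite_graph_def)
  have s'E: "\<sigma>' (x, y) \<in> S'" "\<sigma>' (y, x) = inv (\<sigma>' (x, y))" if "(x, y) \<in> E" for x y
    using sig' that by (auto simp: signature_def)
  have sig: "signature S E \<sigma>" unfolding signature_def
  proof (intro ballI conjI)
    fix e assume e: "e \<in> E"
    obtain x y where xy: "e = (x, y)" by (cases e)
    have yx: "(y, x) \<in> E" using sym e xy by simp
    show "\<sigma> e \<in> S"
    proof (cases "x < y")
      case True then show ?thesis using gg(1) s'E e xy by (simp add: \<sigma>_def)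
    next
      case False
      have "gg (\<sigma>' (y, x)) \<in> S" using gg(1) s'E(1)[OF yx] by blast
      then show ?thesis using False xy Sinv by (simp add: \<sigma>_def)
    qed
    show "\<sigma> (snd e, fst e) = inv (\<sigma> e)"
    proof (cases "x < y")
      case True then show ?thesis using xy by (simp add: \<sigma>_def)
    next
      case False
      then have "y < x" using irr e xy by fastforce
      have "gg (\<sigma>' (y, x)) permutes {1..k}" using gg(1) s'E(1)[OF yx] S by blast
      then show ?thesis using False \<open>y < x\<close> xy by (simp add: \<sigma>_def permutes_inv_inv)
    qed
  qed
  then obtain f where f: "colouring k V E \<sigma> f" using col by (auto simp: S_colourable_def)
  have fV: "f v \<in> {1..k}" if "v \<in> V" for v using f that by (simp add: colouring_def)
  show "\<exists>f. colouring k' V E \<sigma>' f"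
  proof (intro exI[of _ "\<psi> \<circ> f"])
    show "colouring k' V E \<sigma>' (\<psi> \<circ> f)" unfolding colouring_def
    proof (intro conjI allI impI ballI)
      fix v assume "v \<in> V" then show "(\<psi> \<circ> f) v \<in> {1..k'}" using fV psi by (metis comp_apply image_subset_iff)
    next
      fix x y assume e: "(x, y) \<in> E"
      have fx: "f x \<in> {1..k}" and fy: "f y \<in> {1..k}" using fV EV[OF e] by auto
      have ne: "\<sigma> (x, y) (f x) \<noteq> f y" using f e by (simp add: colouring_def)
      show "\<sigma>' (x, y) ((\<psi> \<circ> f) x) \<noteq> (\<psi> \<circ> f) y"
      proof (cases "x < y")
        case True
        then show ?thesis using ne gg(2)[OF s'E(1)[OF e]] fx fy by (auto simp: \<sigma>_def)
      next
        case False
        have yx: "(y, x) \<in> E" using sym e by simp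
        have P': "\<sigma>' (y, x) permutes {1..k'}" using S' s'E(1)[OF yx] by blast
        have P: "gg (\<sigma>' (y, x)) permutes {1..k}" using gg(1) s'E(1)[OF yx] S by blast
        show ?thesis
        proof
          assume "\<sigma>' (x, y) ((\<psi> \<circ> f) x) = (\<psi> \<circ> f) y"
          then have "inv (\<sigma>' (y, x)) (\<psi> (f x)) = \<psi> (f y)" using s'E(2)[OF yx] by simp
          then have "\<sigma>' (y, x) (\<psi> (f y)) = \<psi> (f x)" using permutes_inv_eq[OF P'] by blast
          then have "gg (\<sigma>' (y, x)) (f y) = f x" using gg(2)[OF s'E(1)[OF yx]] fx fy by blast
          then have "inv (gg (\<sigma>' (y, x))) (f x) = f y" using permutes_inv_eq[OF P] by blast
          then show False using ne False by (simp add: \<sigma>_def)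
        qed
      qed
    qed
  qed
qed


lemma S_lambda_perm: "\<pi> \<in> S_lambda k lam \<Longrightarrow> \<pi> permutes {1..k}"
  by (simp add: S_lambda_def)

lemma S_lambda_inv: assumes "\<pi> \<in> S_lambda k lam" shows "inv \<pi> \<in> S_lambda k lam"
proof -
  have P: "\<pi> permutes {1..k}" using assms by (simp add: S_lambda_def)
  have "inv \<pi> ` block lam j = block lam j" if "j < length lam" for j
  proof -
    have "\<pi> ` block lam j = block lam j" using assms that by (simp add: S_lambda_def)
    then have "inv \<pi> ` (\<pi> ` block lam j) = inv \<pi> ` block lam j" by simp
    moreover have "inv \<pi> ` (\<pi> ` block lam j) = block lam j"
      using permutes_inverses(2)[OF P] by (simp add: image_comp)
    ultimately show ?thesis by simp
  qed
  then show ?thesis using permutes_inv[OF P] by (simp add: S_lambda_def)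
qed

lemma partA:
  assumes P: "is_partition k lam" "is_partition k' lp" and G: "goodh lam lp h"
    and GR: "finite_graph V E" and col: "S_colourable (S_lambda k lam) k V E"
  shows "S_colourable (S_lambda k' lp) k' V E"
proof -
  define q where "q = length lam"
  define p where "p = length lp"
  have kk: "k = sum_list lam" "k' = sum_list lp" using P by (auto simp: is_partition_def)
  have hb: "\<forall>b<p. h b < q" and hle: "\<forall>j<q. lam ! j \<le> (\<Sum>b | b < p \<and> h b = j. lp ! b)"
    using G by (auto simp: goodh_def p_def q_def)
  define U where "U j = (\<Union>b\<in>{b. b < p \<and> h b = j}. block lp b)" for j
  have cardU: "card (U j) = (\<Sum>b | b < p \<and> h b = j. lp ! b)" for j
  proof -
    have "card (U j) = (\<Sum>b | b < p \<and> h b = j. card (block lp b))"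
      unfolding U_def by (rule card_UN_disjoint) (auto dest: block_disj)
    also have "\<dots> = (\<Sum>b | b < p \<and> h b = j. lp ! b)" by (rule sum.cong) (auto simp: block_card p_def)
    finally show ?thesis .
  qed
  have Udisj: "U i \<inter> U j = {}" if "i \<noteq> j" for i j
  proof (rule equals0I)
    fix x assume "x \<in> U i \<inter> U j"
    then obtain b1 b2 where "h b1 = i" "h b2 = j" "x \<in> block lp b1" "x \<in> block lp b2" by (auto simp: U_def)
    then show False using block_disj[of b1 b2 lp] \<open>i \<noteq> j\<close> by auto
  qed
  have finU: "finite (U j)" for j by (simp add: U_def)
  have Uperm: "\<pi>' ` U j = U j" if "\<pi>' \<in> S_lambda k' lp" for \<pi>' j
  proof -
    have "\<pi>' ` U j = (\<Union>b\<in>{b. b < p \<and> h b = j}. \<pi>' ` block lp b)" unfolding U_def by (rule image_UN)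
    also have "\<dots> = U j" unfolding U_def
      by (rule SUP_cong[OF refl]) (use that in \<open>simp add: S_lambda_def p_def\<close>)
    finally show ?thesis .
  qed
  have "\<exists>\<psi>j. \<psi>j ` block lam j \<subseteq> U j \<and> inj_on \<psi>j (block lam j)" if "j < q" for j
  proof (rule card_le_inj)
    show "finite (block lam j)" "finite (U j)" by (simp_all add: finU)
    have "card (block lam j) = lam ! j" using block_card that by (simp add: q_def)
    then show "card (block lam j) \<le> card (U j)" using hle that cardU by simp
  qed
  then obtain \<psi>s where psis: "\<And>j. j < q \<Longrightarrow> \<psi>s j ` block lam j \<subseteq> U j \<and> inj_on (\<psi>s j) (block lam j)"
    by metis
  define \<psi> where "\<psi> c = \<psi>s (bidx lam c) c" for c
  have psiB: "\<psi> ` block lam j \<subseteq> U j" "inj_on \<psi> (block lam j)" if "j < q" for j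
  proof -
    have eq: "\<psi> c = \<psi>s j c" if "c \<in> block lam j" for c
      using bidx_eq \<open>j < q\<close> that by (simp add: \<psi>_def q_def)
    show "\<psi> ` block lam j \<subseteq> U j" using psis[OF that] eq by auto
    show "inj_on \<psi> (block lam j)" using psis[OF that] eq by (simp add: inj_on_def)
  qed
  have psi: "\<psi> ` {1..k} \<subseteq> {1..k'}"
  proof
    fix y assume "y \<in> \<psi> ` {1..k}"
    then obtain c where c: "c \<in> {1..k}" "y = \<psi> c" by auto
    then have j: "bidx lam c < q" "c \<in> block lam (bidx lam c)" using bidx kk by (auto simp: q_def)
    then have "y \<in> U (bidx lam c)" using psiB c by auto
    then obtain b where "b < p" "y \<in> block lp b" by (auto simp: U_def)
    then show "y \<in> {1..k'}" using block_sub[of b lp] kk by (auto simp: p_def)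
  qed
  have CP: "\<forall>\<pi>'\<in>S_lambda k' lp. \<exists>\<pi>\<in>S_lambda k lam. \<forall>c\<in>{1..k}. \<forall>d\<in>{1..k}. \<pi>' (\<psi> c) = \<psi> d \<longrightarrow> \<pi> c = d"
  proof
    fix \<pi>' assume \<pi>': "\<pi>' \<in> S_lambda k' lp"
    define D where "D j = {c\<in>block lam j. \<pi>' (\<psi> c) \<in> \<psi> ` block lam j}" for j
    define g where "g j c = inv_into (block lam j) \<psi> (\<pi>' (\<psi> c))" for j c
    have "\<exists>\<pi>j. \<pi>j permutes block lam j \<and> (\<forall>c\<in>D j. \<pi>j c = g j c)" if "j < q" for j
    proof (rule perm_extend)
      show "finite (block lam j)" by simp
      show "D j \<subseteq> block lam j" by (auto simp: D_def)
      show "g j ` D j \<subseteq> block lam j" by (auto simp: D_def g_def inv_into_into)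
      show "inj_on (g j) (D j)"
      proof (rule inj_onI)
        fix x y assume xy: "x \<in> D j" "y \<in> D j" "g j x = g j y"
        then have "\<pi>' (\<psi> x) = \<pi>' (\<psi> y)" unfolding D_def g_def by (metis (no_types, lifting) f_inv_into_f mem_Collect_eq)
        then have "\<psi> x = \<psi> y" using S_lambda_perm[OF \<pi>'] by (metis permutes_inj injD)
        then show "x = y" using psiB(2)[OF that] xy by (auto simp: D_def inj_on_def)
      qed
    qed
    then obtain \<pi>s where \<pi>s: "\<And>j. j < q \<Longrightarrow> \<pi>s j permutes block lam j \<and> (\<forall>c\<in>D j. \<pi>s j c = g j c)"
      by metis
    define \<pi> where "\<pi> = (\<lambda>c. if c \<in> {1..sum_list lam} then \<pi>s (bidx lam c) c else c)"
    have gl: "\<pi> \<in> S_lambda (sum_list lam) lam" "\<forall>j<length lam. \<forall>c\<in>block lam j. \<pi> c = \<pi>s j c"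
      using glue[of lam \<pi>s] \<pi>s unfolding \<pi>_def q_def by auto
    show "\<exists>\<pi>\<in>S_lambda k lam. \<forall>c\<in>{1..k}. \<forall>d\<in>{1..k}. \<pi>' (\<psi> c) = \<psi> d \<longrightarrow> \<pi> c = d"
    proof (intro bexI[of _ \<pi>] ballI impI)
      show "\<pi> \<in> S_lambda k lam" using gl kk by simp
      fix c d assume c: "c \<in> {1..k}" and d: "d \<in> {1..k}" and eq: "\<pi>' (\<psi> c) = \<psi> d"
      define j where "j = bidx lam c"
      define j2 where "j2 = bidx lam d"
      have cj: "j < q" "c \<in> block lam j" using bidx c kk by (auto simp: j_def q_def)
      have dj: "j2 < q" "d \<in> block lam j2" using bidx d kk by (auto simp: j2_def q_def)
      have "\<psi> c \<in> U j" using psiB(1)[OF cj(1)] cj(2) by auto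
      then have "\<pi>' (\<psi> c) \<in> U j" using Uperm[OF \<pi>', of j] by (metis imageI)
      then have "\<psi> d \<in> U j" using eq by simp
      moreover have "\<psi> d \<in> U j2" using psiB(1)[OF dj(1)] dj(2) by blast
      ultimately have "j2 = j" using Udisj[of j2 j] by (cases "j2 = j") auto
      then have cD: "c \<in> D j" using eq cj(2) dj(2) unfolding D_def by auto
      have "\<pi> c = \<pi>s j c" using gl(2) cj by (simp add: q_def)
      also have "\<pi>s j c = g j c" using \<pi>s[OF cj(1)] cD by blast
      also have "g j c = d" unfolding g_def eq
        using psiB(2)[OF cj(1)] dj \<open>j2 = j\<close> by (simp add: inv_into_f_f)
      finally show "\<pi> c = d" .
    qed
  qed
  have A1: "\<forall>\<pi>\<in>S_lambda k lam. \<pi> permutes {1..k}" using S_lambda_perm by blast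
  have A2: "\<forall>\<pi>\<in>S_lambda k' lp. \<pi> permutes {1..k'}" using S_lambda_perm by blast
  have A3: "\<forall>\<pi>\<in>S_lambda k lam. inv \<pi> \<in> S_lambda k lam" using S_lambda_inv by blast
  show ?thesis by (rule transfer_graph[OF A1 A2 A3 psi CP GR col])
qed


locale PB =
  fixes lam lp :: "nat list"
  assumes lam_pos: "\<forall>x\<in>set lam. 0 < x" and lp_pos: "\<forall>x\<in>set lp. 0 < x"
    and q_pos: "0 < length lam" and p_pos: "0 < length lp"
    and NoH: "\<forall>h. \<not> goodh lam lp h"
begin

abbreviation "q \<equiv> length lam"
abbreviation "p \<equiv> length lp"
abbreviation "K \<equiv> sum_list lp"
definition "NN = p * K + 1"

definition cls :: "nat \<Rightarrow> nat" where "cls n = (n div NN) mod q"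
definition bs :: "nat \<Rightarrow> nat" where "bs n = (n div NN) * NN"
definition cnt :: "(nat \<Rightarrow> nat) \<Rightarrow> nat \<Rightarrow> nat \<Rightarrow> nat \<Rightarrow> nat" where
  "cnt c t i b = card {x. x < t \<and> cls x = i \<and> bidx lp (c x) = b}"
definition heavy :: "(nat \<Rightarrow> nat) \<Rightarrow> nat \<Rightarrow> nat \<Rightarrow> nat set" where
  "heavy c t i = {b. b < p \<and> K \<le> cnt c t i b}"
definition others :: "(nat \<Rightarrow> nat) \<Rightarrow> nat \<Rightarrow> nat \<Rightarrow> nat set" where
  "others c t j = {b. \<exists>i<q. i \<noteq> j \<and> b \<in> heavy c t i}"
definition excl :: "(nat \<Rightarrow> nat) \<Rightarrow> nat \<Rightarrow> nat \<Rightarrow> nat set" where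
  "excl c t j = heavy c t j - others c t j"
definition KB :: "(nat \<Rightarrow> nat) \<Rightarrow> nat \<Rightarrow> nat set" where
  "KB c n = others c (bs n) (cls n) \<union>
     (if (\<Sum>b\<in>excl c (bs n) (cls n). lp ! b) < lam ! (cls n) then excl c (bs n) (cls n) else {})"
definition valid :: "(nat \<Rightarrow> nat) \<Rightarrow> nat \<Rightarrow> bool" where
  "valid c D \<longleftrightarrow> (\<forall>n<D. c n \<in> {1..K} \<and> bidx lp (c n) \<notin> KB c n)"
definition Phi :: "(nat \<Rightarrow> nat) \<Rightarrow> nat \<Rightarrow> nat" where
  "Phi c t = (\<Sum>i<q. card (heavy c t i))"
definition "DD = (q * p + 1) * (q * NN)"

lemma NN_pos: "0 < NN" by (simp add: NN_def)

lemma cnt_mono: "t \<le> t' \<Longrightarrow> cnt c t i b \<le> cnt c t' i b"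
  unfolding cnt_def by (rule card_mono) auto

lemma heavy_mono: "t \<le> t' \<Longrightarrow> heavy c t i \<subseteq> heavy c t' i"
proof
  fix b assume "t \<le> t'" "b \<in> heavy c t i"
  then show "b \<in> heavy c t' i" using cnt_mono[of t t' c i b] unfolding heavy_def by simp
qed

lemma heavy_sub: "heavy c t i \<subseteq> {..<p}" by (auto simp: heavy_def)

lemma finite_heavy[simp]: "finite (heavy c t i)" by (rule finite_subset[OF heavy_sub]) simp

lemma Phi_bound: "Phi c t \<le> q * p"
proof -
  have "card (heavy c t i) \<le> p" for i using card_mono[OF finite_lessThan heavy_sub] by simp
  then have "Phi c t \<le> (\<Sum>i<q. p)" unfolding Phi_def by (intro sum_mono) auto
  then show ?thesis by simp
qed

lemma heavy_const:
  assumes "t0 \<le> t1" "Phi c t1 \<le> Phi c t0" "i < q" "t0 \<le> t" "t \<le> t1"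
  shows "heavy c t i = heavy c t0 i"
proof -
  have le: "card (heavy c t0 i') \<le> card (heavy c t1 i')" for i'
    using heavy_mono[OF assms(1)] by (simp add: card_mono)
  have eq: "card (heavy c t0 i) = card (heavy c t1 i)"
  proof (rule ccontr)
    assume "card (heavy c t0 i) \<noteq> card (heavy c t1 i)"
    then have "card (heavy c t0 i) < card (heavy c t1 i)" using le[of i] by simp
    then have "Phi c t0 < Phi c t1" unfolding Phi_def
      by (intro sum_strict_mono_ex1) (use le assms(3) in auto)
    then show False using assms(2) by simp
  qed
  have "heavy c t0 i = heavy c t1 i"
    by (rule card_subset_eq) (use heavy_mono[OF assms(1)] eq in auto)
  then show ?thesis using heavy_mono[OF assms(4)] heavy_mono[OF assms(5)] by blast
qed

lemma card_group:
  assumes "finite A" "f ` A \<subseteq> B" "finite B"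
  shows "card A = (\<Sum>b\<in>B. card {a\<in>A. f a = b})"
proof -
  have "(\<Sum>b\<in>B. sum (\<lambda>_. 1::nat) {a. a \<in> A \<and> f a = b}) = sum (\<lambda>_. 1) A"
    by (rule sum.group) (use assms in auto)
  then show ?thesis by simp
qed

lemma pigeon:
  assumes "finite A" "card A = NN" "\<forall>a\<in>A. f a < p"
  shows "\<exists>b<p. K \<le> card {a\<in>A. f a = b}"
proof (rule ccontr)
  assume "\<not> ?thesis"
  then have "\<forall>b<p. card {a\<in>A. f a = b} \<le> K - 1" by auto
  then have "(\<Sum>b\<in>{..<p}. card {a\<in>A. f a = b}) \<le> (\<Sum>b\<in>{..<p}. K - 1)" by (intro sum_mono) auto
  moreover have "card A = (\<Sum>b\<in>{..<p}. card {a\<in>A. f a = b})"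
    by (rule card_group) (use assms in auto)
  ultimately have "NN \<le> p * (K - 1)" using assms(2) by simp
  moreover have "p * (K - 1) \<le> p * K" by (rule mult_le_mono2) simp
  ultimately show False unfolding NN_def by linarith
qed

lemma K_pos: "0 < K"
proof -
  have "lp ! 0 \<in> set lp" using p_pos by simp
  then have "0 < lp ! 0" using lp_pos by blast
  moreover have "lp ! 0 \<le> K" using p_pos by (metis elem_le_sum_list)
  ultimately show ?thesis by simp
qed

lemma cls_batch: "m < NN \<Longrightarrow> j < q \<Longrightarrow> cls ((r * q + j) * NN + m) = j"
  unfolding cls_def using NN_pos by simp

lemma bs_batch: "m < NN \<Longrightarrow> bs ((r * q + j) * NN + m) = (r * q + j) * NN"
  unfolding bs_def using NN_pos by simp

lemma others_eq: "(\<forall>i<q. heavy c t i = heavy c t' i) \<Longrightarrow> others c t j = others c t' j"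
  unfolding others_def by auto

lemma phase:
  assumes V: "valid c DD" and R: "(r + 1) * (q * NN) \<le> DD"
  shows "Phi c (r * (q * NN)) < Phi c ((r + 1) * (q * NN))"
proof (rule ccontr)
  define t0 where "t0 = r * (q * NN)"
  define t1 where "t1 = (r + 1) * (q * NN)"
  assume "\<not> Phi c (r * (q * NN)) < Phi c ((r + 1) * (q * NN))"
  then have Ph: "Phi c t1 \<le> Phi c t0" by (simp add: t0_def t1_def)
  have t01: "t0 \<le> t1" by (simp add: t0_def t1_def)
  have HC: "heavy c t i = heavy c t0 i" if "i < q" "t0 \<le> t" "t \<le> t1" for t i
    using heavy_const[OF t01 Ph that(1) that(2,3)] .
  define hh where "hh b = (if \<exists>i<q. b \<in> excl c t0 i then (SOME i. i < q \<and> b \<in> excl c t0 i) else 0)" for b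
  have hhq: "\<forall>b<p. hh b < q" using q_pos by (auto simp: hh_def) (metis (mono_tags, lifting) someI_ex)
  have excl_disj: "i = j" if "b \<in> excl c t0 i" "b \<in> excl c t0 j" "i < q" "j < q" for b i j
    using that unfolding excl_def others_def by blast
  have exsub: "excl c t0 j \<subseteq> {b. b < p \<and> hh b = j}" if "j < q" for j
  proof
    fix b assume b: "b \<in> excl c t0 j"
    then have ex: "\<exists>i<q. b \<in> excl c t0 i" using that by blast
    then have "(SOME i. i < q \<and> b \<in> excl c t0 i) < q \<and> b \<in> excl c t0 (SOME i. i < q \<and> b \<in> excl c t0 i)"
      by (metis (mono_tags, lifting) someI_ex)
    then have "hh b = j" using excl_disj[OF _ b _ that] ex by (simp add: hh_def)
    moreover have "b < p" using b heavy_sub by (auto simp: excl_def)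
    ultimately show "b \<in> {b. b < p \<and> hh b = j}" by simp
  qed
  obtain j where j: "j < q" "(\<Sum>b | b < p \<and> hh b = j. lp ! b) < lam ! j"
    using NoH hhq unfolding goodh_def by (metis not_le)
  have small: "(\<Sum>b\<in>excl c t0 j. lp ! b) < lam ! j"
  proof -
    have "(\<Sum>b\<in>excl c t0 j. lp ! b) \<le> (\<Sum>b | b < p \<and> hh b = j. lp ! b)"
      by (rule sum_mono2) (use exsub[OF j(1)] in auto)
    then show ?thesis using j(2) by simp
  qed
  define tb where "tb = (r * q + j) * NN"
  have tbe: "tb = t0 + j * NN" by (simp add: tb_def t0_def algebra_simps)
  have "(j + 1) * NN \<le> q * NN" using j(1) by (intro mult_le_mono1) simp
  then have tb: "t0 \<le> tb" "tb + NN \<le> t1" using tbe by (auto simp: t1_def t0_def algebra_simps)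
  have inA: "bidx lp (c n) \<notin> heavy c t0 j \<and> bidx lp (c n) < p" if "n \<in> {tb..<tb + NN}" for n
  proof -
    define m where "m = n - tb"
    have m: "m < NN" "n = (r * q + j) * NN + m" using that by (auto simp: m_def tb_def)
    have cn: "cls n = j" "bs n = tb" using m cls_batch bs_batch j(1) by (auto simp: tb_def)
    have "n < t1" using that tb by simp
    also have "t1 \<le> DD" using R by (simp add: t1_def)
    finally have "n < DD" .
    then have vn: "c n \<in> {1..K}" "bidx lp (c n) \<notin> KB c n" using V by (auto simp: valid_def)
    have HB: "\<forall>i<q. heavy c tb i = heavy c t0 i"
    proof (intro allI impI)
      fix i assume "i < q" then show "heavy c tb i = heavy c t0 i" by (rule HC) (use tb in auto)
    qed
    have oth: "others c tb j = others c t0 j" using others_eq[OF HB] .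
    have exc: "excl c tb j = excl c t0 j" using oth HB j(1) by (simp add: excl_def)
    have "KB c n = others c t0 j \<union> excl c t0 j" using small cn oth exc by (simp add: KB_def)
    moreover have "heavy c t0 j \<subseteq> others c t0 j \<union> excl c t0 j" by (auto simp: excl_def)
    ultimately show ?thesis using vn bidx(1)[OF vn(1)] by blast
  qed
  obtain b where b: "b < p" "K \<le> card {a\<in>{tb..<tb + NN}. bidx lp (c a) = b}"
    using pigeon[of "{tb..<tb + NN}" "\<lambda>a. bidx lp (c a)"] inA by auto
  have sub: "{a\<in>{tb..<tb + NN}. bidx lp (c a) = b} \<subseteq> {x. x < t1 \<and> cls x = j \<and> bidx lp (c x) = b}"
  proof
    fix a assume a: "a \<in> {a\<in>{tb..<tb + NN}. bidx lp (c a) = b}"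
    define m where "m = a - tb"
    have m: "m < NN" "a = (r * q + j) * NN + m" using a by (auto simp: m_def tb_def)
    then show "a \<in> {x. x < t1 \<and> cls x = j \<and> bidx lp (c x) = b}" using a tb cls_batch j(1) by auto
  qed
  have "K \<le> cnt c t1 j b"
  proof -
    have "finite {x. x < t1 \<and> cls x = j \<and> bidx lp (c x) = b}" by simp
    from card_mono[OF this sub] show ?thesis using b(2) unfolding cnt_def by linarith
  qed
  then have "b \<in> heavy c t1 j" using b(1) by (simp add: heavy_def)
  then have bH: "b \<in> heavy c t0 j" using HC[OF j(1) t01 order_refl] by simp
  have "{a\<in>{tb..<tb + NN}. bidx lp (c a) = b} \<noteq> {}" using b(2) K_pos by (metis card.empty not_le)
  then obtain a where "a \<in> {tb..<tb + NN}" "bidx lp (c a) = b" by blast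
  then show False using inA bH by blast
qed

lemma not_valid: "\<not> valid c DD"
proof
  assume V: "valid c DD"
  have "r \<le> Phi c (r * (q * NN))" if "r \<le> q * p + 1" for r
    using that
  proof (induction r)
    case 0 then show ?case by simp
  next
    case (Suc r)
    have "(r + 1) * (q * NN) \<le> DD" using Suc.prems unfolding DD_def by (intro mult_le_mono1) simp
    then have "Phi c (r * (q * NN)) < Phi c ((r + 1) * (q * NN))" using phase[OF V] by blast
    then show ?case using Suc by simp
  qed
  then have "q * p + 1 \<le> Phi c DD" unfolding DD_def by blast
  then show False using Phi_bound[of c DD] by simp
qed

end


context PB begin

definition KC :: "(nat \<Rightarrow> nat) \<Rightarrow> nat \<Rightarrow> nat set" where
  "KC c n = (\<Union>b\<in>KB c n. block lp b)"

definition Pgood :: "nat list \<Rightarrow> (nat \<Rightarrow> nat option) \<Rightarrow> bool" where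
  "Pgood w g \<longleftrightarrow> (\<forall>i d. g i = Some d \<longrightarrow> i < length w \<and> d \<in> block lp (bidx lp (w ! i))) \<and>
     card {i. g i \<noteq> None \<and> cls i = cls (length w)} < lam ! cls (length w) \<and>
     KC (nth w) (length w) \<subseteq> {d. \<exists>i. g i = Some d}"

lemma bs_le: "bs n \<le> n" unfolding bs_def by (simp add: div_times_less_eq_dividend)

lemma cls_lt: "cls n < q" unfolding cls_def using q_pos by simp

lemma lam_cls_pos: "0 < lam ! cls n" using cls_lt lam_pos nth_mem by blast

lemma lp_le_K: "b < p \<Longrightarrow> lp ! b \<le> K" by (simp add: elem_le_sum_list)

lemma realize: "\<exists>g. Pgood w g"
proof -
  define n where "n = length w"
  define c where "c = nth w"
  define t where "t = bs n"
  define j where "j = cls n"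
  define sm where "sm \<longleftrightarrow> (\<Sum>b\<in>excl c t j. lp ! b) < lam ! j"
  have KBeq: "KB c n = others c t j \<union> (if sm then excl c t j else {})"
    by (simp add: KB_def sm_def t_def j_def)
  have KBp: "b < p" if "b \<in> KB c n" for b
    using that heavy_sub unfolding KBeq others_def excl_def by (auto split: if_splits)
  have "\<forall>b\<in>KB c n. \<exists>P. P \<subseteq> {x. x < t \<and> bidx lp (c x) = b} \<and> card P = lp ! b \<and> finite P \<and>
          (b \<in> others c t j \<longrightarrow> (\<forall>x\<in>P. cls x \<noteq> j)) \<and>
          (b \<notin> others c t j \<longrightarrow> (\<forall>x\<in>P. cls x = j) \<and> b \<in> excl c t j \<and> sm)"
  proof
    fix b assume b: "b \<in> KB c n"
    have lpb: "lp ! b \<le> K" using lp_le_K KBp[OF b] .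
    show "\<exists>P. P \<subseteq> {x. x < t \<and> bidx lp (c x) = b} \<and> card P = lp ! b \<and> finite P \<and>
          (b \<in> others c t j \<longrightarrow> (\<forall>x\<in>P. cls x \<noteq> j)) \<and>
          (b \<notin> others c t j \<longrightarrow> (\<forall>x\<in>P. cls x = j) \<and> b \<in> excl c t j \<and> sm)"
    proof (cases "b \<in> others c t j")
      case True
      then obtain i where i: "i < q" "i \<noteq> j" "b \<in> heavy c t i" unfolding others_def by blast
      then have "lp ! b \<le> card {x. x < t \<and> cls x = i \<and> bidx lp (c x) = b}"
        using lpb unfolding heavy_def cnt_def by simp
      then obtain T where T: "T \<subseteq> {x. x < t \<and> cls x = i \<and> bidx lp (c x) = b}" "card T = lp ! b" "finite T"
        by (rule obtain_subset_with_card_n)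
      show ?thesis using T i True by (intro exI[of _ T]) auto
    next
      case False
      then have ex: "b \<in> excl c t j" "sm" using b unfolding KBeq by (auto split: if_splits)
      then have "b \<in> heavy c t j" by (simp add: excl_def)
      then have "lp ! b \<le> card {x. x < t \<and> cls x = j \<and> bidx lp (c x) = b}"
        using lpb unfolding heavy_def cnt_def by simp
      then obtain T where T: "T \<subseteq> {x. x < t \<and> cls x = j \<and> bidx lp (c x) = b}" "card T = lp ! b" "finite T"
        by (rule obtain_subset_with_card_n)
      show ?thesis using T ex False by (intro exI[of _ T]) auto
    qed
  qed
  from bchoice[OF this] obtain P where P0: "\<forall>b\<in>KB c n. P b \<subseteq> {x. x < t \<and> bidx lp (c x) = b} \<and> card (P b) = lp ! b \<and> finite (P b) \<and>
          (b \<in> others c t j \<longrightarrow> (\<forall>x\<in>P b. cls x \<noteq> j)) \<and>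
          (b \<notin> others c t j \<longrightarrow> (\<forall>x\<in>P b. cls x = j) \<and> b \<in> excl c t j \<and> sm)"
    by blast
  have P: "P b \<subseteq> {x. x < t \<and> bidx lp (c x) = b} \<and> card (P b) = lp ! b \<and> finite (P b) \<and>
          (b \<in> others c t j \<longrightarrow> (\<forall>x\<in>P b. cls x \<noteq> j)) \<and>
          (b \<notin> others c t j \<longrightarrow> (\<forall>x\<in>P b. cls x = j) \<and> b \<in> excl c t j \<and> sm)" if "b \<in> KB c n" for b
    using P0 that by (rule bspec)
  have "\<forall>b\<in>KB c n. \<exists>\<phi>. bij_betw \<phi> (P b) (block lp b)"
  proof
    fix b assume that: "b \<in> KB c n"
    show "\<exists>\<phi>. bij_betw \<phi> (P b) (block lp b)"
      using P[OF that] block_card[OF KBp[OF that]] by (intro finite_same_card_bij) auto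
  qed
  from bchoice[OF this] obtain \<phi> where \<phi>0: "\<forall>b\<in>KB c n. bij_betw (\<phi> b) (P b) (block lp b)" by blast
  have \<phi>: "bij_betw (\<phi> b) (P b) (block lp b)" if "b \<in> KB c n" for b using \<phi>0 that by (rule bspec)
  define g where "g i = (if \<exists>b\<in>KB c n. i \<in> P b then Some (\<phi> (bidx lp (c i)) i) else None)" for i
  have tn: "t \<le> n" by (simp add: t_def bs_le)
  have gS: "\<exists>b\<in>KB c n. i \<in> P b \<and> bidx lp (c i) = b \<and> i < t" if "g i \<noteq> None" for i
  proof -
    have "\<exists>b\<in>KB c n. i \<in> P b" using that by (simp add: g_def split: if_splits)
    then obtain b where b: "b \<in> KB c n" "i \<in> P b" by blast
    then show ?thesis using P[OF b(1)] by blast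
  qed
  show ?thesis
  proof (intro exI[of _ g])
    have A: "\<forall>i d. g i = Some d \<longrightarrow> i < length w \<and> d \<in> block lp (bidx lp (w ! i))"
    proof (intro allI impI)
      fix i d assume gi: "g i = Some d"
      then obtain b where b: "b \<in> KB c n" "i \<in> P b" "bidx lp (c i) = b" "i < t" using gS by blast
      have "g i = Some (\<phi> (bidx lp (c i)) i)" using b(1,2) by (auto simp: g_def)
      then have "d = \<phi> b i" using gi b(3) by simp
      then have "d \<in> block lp b" using \<phi>[OF b(1)] b(2) by (auto simp: bij_betw_def)
      then show "i < length w \<and> d \<in> block lp (bidx lp (w ! i))" using b tn by (simp add: n_def c_def)
    qed
    have B: "card {i. g i \<noteq> None \<and> cls i = j} < lam ! j"
    proof (cases sm)
      case False
      have "{i. g i \<noteq> None \<and> cls i = j} = {}"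
      proof (rule equals0I)
        fix i assume "i \<in> {i. g i \<noteq> None \<and> cls i = j}"
        then obtain b where b: "b \<in> KB c n" "i \<in> P b" "cls i = j" using gS by blast
        have "b \<in> others c t j" using P[OF b(1)] False by blast
        then show False using P[OF b(1)] b by blast
      qed
      then show ?thesis using lam_cls_pos[of n] unfolding j_def by (metis card.empty)
    next
      case True
      have sub: "{i. g i \<noteq> None \<and> cls i = j} \<subseteq> (\<Union>b\<in>excl c t j. P b)"
      proof
        fix i assume "i \<in> {i. g i \<noteq> None \<and> cls i = j}"
        then obtain b where b: "b \<in> KB c n" "i \<in> P b" "cls i = j" using gS by blast
        have "b \<notin> others c t j" using P[OF b(1)] b by blast
        then have "b \<in> excl c t j" using P[OF b(1)] by blast
        then show "i \<in> (\<Union>b\<in>excl c t j. P b)" using b by blast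
      qed
      have exKB: "excl c t j \<subseteq> KB c n" using True by (simp add: KBeq)
      have finex: "finite (excl c t j)" by (simp add: excl_def)
      have "card {i. g i \<noteq> None \<and> cls i = j} \<le> card (\<Union>b\<in>excl c t j. P b)"
        by (rule card_mono[OF _ sub]) (use finex exKB P in blast)
      also have "\<dots> \<le> (\<Sum>b\<in>excl c t j. card (P b))" by (rule card_UN_le[OF finex])
      also have "\<dots> = (\<Sum>b\<in>excl c t j. lp ! b)" by (rule sum.cong) (use exKB P in auto)
      also have "\<dots> < lam ! j" using True by (simp add: sm_def)
      finally show ?thesis .
    qed
    have C: "KC c n \<subseteq> {d. \<exists>i. g i = Some d}"
    proof
      fix d assume "d \<in> KC c n"
      then obtain b where b: "b \<in> KB c n" "d \<in> block lp b" by (auto simp: KC_def)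
      have "d \<in> \<phi> b ` P b" using \<phi>[OF b(1)] b(2) by (simp add: bij_betw_def)
      then obtain i where i: "i \<in> P b" "\<phi> b i = d" by blast
      have "bidx lp (c i) = b" using P[OF b(1)] i(1) by blast
      then have "g i = Some d" using b(1) i by (auto simp: g_def)
      then show "d \<in> {d. \<exists>i. g i = Some d}" by blast
    qed
    show "Pgood w g" unfolding Pgood_def using A B C by (simp add: n_def c_def j_def)
  qed
qed

end


primrec br :: "(nat list \<Rightarrow> nat) \<Rightarrow> nat \<Rightarrow> nat list" where
  "br f 0 = []"
| "br f (Suc n) = br f n @ [f (br f n)]"

lemma br_length[simp]: "length (br f n) = n" by (induction n) auto

lemma br_take: "i \<le> n \<Longrightarrow> take i (br f n) = br f i"
proof (induction n)
  case 0 then show ?case by simp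
next
  case (Suc n)
  show ?case
  proof (cases "i = Suc n")
    case True then show ?thesis by (metis br_length order_refl take_all)
  next
    case False then have "i \<le> n" using Suc.prems by simp
    then show ?thesis using Suc.IH by simp
  qed
qed

lemma br_nth: "i < n \<Longrightarrow> br f n ! i = f (br f i)"
proof -
  assume "i < n"
  then have "br f n ! i = take (Suc i) (br f n) ! i" by simp
  also have "\<dots> = br f (Suc i) ! i" using br_take[of "Suc i" n f] \<open>i < n\<close> by simp
  also have "\<dots> = f (br f i)" by (simp add: nth_append)
  finally show ?thesis .
qed

lemma transpose_S:
  assumes "b < length lp" "a \<in> block lp b" "d \<in> block lp b"
  shows "transpose a d \<in> S_lambda (sum_list lp) lp"
proof -
  have ad: "a \<in> {1..sum_list lp}" "d \<in> {1..sum_list lp}" using assms block_sub by blast+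
  have "transpose a d ` block lp b' = block lp b'" if "b' < length lp" for b'
  proof (cases "b' = b")
    case True then show ?thesis using permutes_image[OF permutes_swap_id[OF assms(2,3)]] by simp
  next
    case False
    then have "a \<notin> block lp b'" "d \<notin> block lp b'" using assms block_disj[of b b' lp] by blast+
    then have "\<forall>x\<in>block lp b'. transpose a d x = x" by (metis transpose_apply_other)
    then show ?thesis by (simp add: image_cong)
  qed
  then show ?thesis using permutes_swap_id[OF ad] by (simp add: S_lambda_def)
qed

lemma id_S: "id \<in> S_lambda k lam" by (simp add: S_lambda_def permutes_id)

context PB begin

definition gw :: "nat list \<Rightarrow> nat \<Rightarrow> nat option" where "gw w = (SOME g. Pgood w g)"

lemma gw: "Pgood w (gw w)" unfolding gw_def using realize by (rule someI_ex)

lemma gw_lt: "gw w i = Some d \<Longrightarrow> i < length w \<and> d \<in> block lp (bidx lp (w ! i))"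
  using gw[of w] unfolding Pgood_def by blast

definition Nodes :: "nat list set" where "Nodes = {w. set w \<subseteq> {1..K} \<and> length w < DD}"

definition FA :: "(nat list \<times> nat list) set" where
  "FA = {(u, w). w \<in> Nodes \<and> length u < length w \<and> u = take (length u) w \<and> gw w (length u) \<noteq> None}"

definition LE :: "(nat list \<times> nat list) set" where "LE = FA \<union> (\<lambda>(u, w). (w, u)) ` FA"

definition VV :: "nat set" where "VV = to_nat ` Nodes"
definition EE :: "(nat \<times> nat) set" where "EE = (\<lambda>(u, w). (to_nat u, to_nat w)) ` LE"

lemma FA_nodes: "(u, w) \<in> FA \<Longrightarrow> u \<in> Nodes \<and> w \<in> Nodes"
proof -
  assume a: "(u, w) \<in> FA"
  then have "w \<in> Nodes" "u = take (length u) w" "length u < length w" by (auto simp: FA_def)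
  then show ?thesis unfolding Nodes_def by (metis (mono_tags, lifting) dual_order.trans mem_Collect_eq order.strict_trans set_take_subset)
qed

lemma finite_Nodes: "finite Nodes"
proof (rule finite_subset)
  show "Nodes \<subseteq> {xs. set xs \<subseteq> {1..K} \<and> length xs \<le> DD}" by (auto simp: Nodes_def)
  show "finite {xs. set xs \<subseteq> {1..K} \<and> length xs \<le> DD}" by (rule finite_lists_length_le) simp
qed

lemma graph: "finite_graph VV EE"
  unfolding finite_graph_def
proof (intro conjI allI impI)
  show "finite VV" using finite_Nodes by (simp add: VV_def)
  show "EE \<subseteq> VV \<times> VV" using FA_nodes by (force simp: EE_def LE_def VV_def)
next
  fix u v assume "(u, v) \<in> EE" then show "(v, u) \<in> EE" by (force simp: EE_def LE_def)
next
  fix v show "(v, v) \<notin> EE"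
  proof
    assume "(v, v) \<in> EE"
    then obtain a b where ab: "(a, b) \<in> LE" "to_nat a = v" "to_nat b = v" by (auto simp: EE_def)
    then have "a = b" by (metis from_nat_to_nat)
    then show False using ab(1) by (auto simp: LE_def FA_def)
  qed
qed

definition sw :: "nat list \<Rightarrow> nat list \<Rightarrow> nat \<Rightarrow> nat" where
  "sw u w = (if length u < length w then (case gw w (length u) of Some d \<Rightarrow> transpose (w ! length u) d | None \<Rightarrow> id)
             else if length w < length u then (case gw u (length w) of Some d \<Rightarrow> transpose (u ! length w) d | None \<Rightarrow> id)
             else id)"

lemma sw_sym: "sw u w = sw w u" unfolding sw_def by auto

lemma sw_inv: "inv (sw u w) = sw u w"
  unfolding sw_def by (auto split: option.splits simp: inv_id)

lemma sw_S: assumes "(u, w) \<in> FA" shows "sw u w \<in> S_lambda K lp"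
proof -
  from assms obtain d where d: "gw w (length u) = Some d" and w: "w \<in> Nodes" and l: "length u < length w"
    by (auto simp: FA_def)
  have sw: "sw u w = transpose (w ! length u) d" using d l by (simp add: sw_def)
  have a: "w ! length u \<in> {1..K}" using w l by (auto simp: Nodes_def dest: nth_mem)
  have "d \<in> block lp (bidx lp (w ! length u))" using gw_lt[OF d] by simp
  then show ?thesis unfolding sw using transpose_S[OF bidx(1)[OF a] bidx(2)[OF a]] by blast
qed

lemma cnt_cong: "(\<forall>x<t. c x = c' x) \<Longrightarrow> cnt c t i b = cnt c' t i b"
  unfolding cnt_def by (rule arg_cong[where f=card]) auto

lemma KB_cong: assumes "\<forall>x<n. c x = c' x" shows "KB c n = KB c' n"
proof -
  have "\<forall>x<bs n. c x = c' x" using assms bs_le by (meson order_less_le_trans)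
  then have "cnt c (bs n) = cnt c' (bs n)" using cnt_cong by (intro ext) blast
  then have "heavy c (bs n) = heavy c' (bs n)" unfolding heavy_def by (intro ext) simp
  then show ?thesis unfolding KB_def excl_def others_def by simp
qed

lemma not_colourable: "\<not> S_colourable (S_lambda K lp) K VV EE"
proof
  define \<sigma>' where "\<sigma>' e = sw (from_nat (fst e)) (from_nat (snd e))" for e :: "nat \<times> nat"
  have sig: "signature (S_lambda K lp) EE \<sigma>'" unfolding signature_def
  proof (intro ballI conjI)
    fix e assume "e \<in> EE"
    then obtain u w where uw: "(u, w) \<in> LE" "e = (to_nat u, to_nat w)" by (auto simp: EE_def)
    then have s: "\<sigma>' e = sw u w" by (simp add: \<sigma>'_def)
    have "(u, w) \<in> FA \<or> (w, u) \<in> FA" using uw(1) by (auto simp: LE_def)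
    then show "\<sigma>' e \<in> S_lambda K lp" using sw_S sw_sym s by metis
    show "\<sigma>' (snd e, fst e) = inv (\<sigma>' e)" using s uw sw_sym sw_inv by (simp add: \<sigma>'_def)
  qed
  assume "S_colourable (S_lambda K lp) K VV EE"
  then obtain F where F: "colouring K VV EE \<sigma>' F" using sig by (auto simp: S_colourable_def)
  define f where "f u = F (to_nat (u :: nat list))" for u
  define c where "c i = f (br f i)" for i
  have brN: "br f n \<in> Nodes" if "n < DD" for n
    using that
  proof (induction n)
    case 0 then show ?case by (simp add: Nodes_def)
  next
    case (Suc n)
    then have N: "br f n \<in> Nodes" by simp
    then have "to_nat (br f n) \<in> VV" by (simp add: VV_def)
    then have "f (br f n) \<in> {1..K}" using F by (simp add: colouring_def f_def)
    then show ?case using N Suc.prems by (simp add: Nodes_def)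
  qed
  have "valid c DD" unfolding valid_def
  proof (intro allI impI conjI)
    fix n assume n: "n < DD"
    have "to_nat (br f n) \<in> VV" using brN[OF n] by (simp add: VV_def)
    then show cn: "c n \<in> {1..K}" using F by (simp add: colouring_def f_def c_def)
    show "bidx lp (c n) \<notin> KB c n"
    proof
      assume b: "bidx lp (c n) \<in> KB c n"
      have "KB c n = KB (nth (br f n)) n" by (rule KB_cong) (simp add: c_def br_nth)
      then have "c n \<in> KC (nth (br f n)) (length (br f n))"
        using b bidx(2)[OF cn] by (auto simp: KC_def)
      then obtain i where gi: "gw (br f n) i = Some (c n)" using gw[of "br f n"] unfolding Pgood_def by blast
      then have i: "i < n" using gw_lt by fastforce
      have tk: "take i (br f n) = br f i" using br_take i by simp
      have "(br f i, br f n) \<in> FA" using brN[OF n] i tk gi by (auto simp: FA_def)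
      then have "(to_nat (br f i), to_nat (br f n)) \<in> EE" by (force simp: EE_def LE_def)
      then have ne: "\<sigma>' (to_nat (br f i), to_nat (br f n)) (F (to_nat (br f i))) \<noteq> F (to_nat (br f n))"
        using F by (simp add: colouring_def)
      have "\<sigma>' (to_nat (br f i), to_nat (br f n)) = transpose (c i) (c n)"
        using gi i by (simp add: \<sigma>'_def sw_def br_nth c_def)
      then show False using ne by (simp add: f_def c_def)
    qed
  qed
  then show False using not_valid by blast
qed

lemma FA_pred: "(u, w) \<in> FA \<Longrightarrow> u = take (length u) w \<and> length u < length w \<and> gw w (length u) \<noteq> None \<and> w \<in> Nodes"
  by (auto simp: FA_def)

lemma pred_card:
  "card {u. (u, w) \<in> FA \<and> cls (length u) = j} \<le> card {i. gw w i \<noteq> None \<and> cls i = j}"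
proof -
  have fin: "finite {i. gw w i \<noteq> None \<and> cls i = j}"
  proof (rule finite_subset[of _ "{..<length w}"])
    show "{i. gw w i \<noteq> None \<and> cls i = j} \<subseteq> {..<length w}"
    proof
      fix i assume "i \<in> {i. gw w i \<noteq> None \<and> cls i = j}"
      then obtain d where "gw w i = Some d" by auto
      then show "i \<in> {..<length w}" using gw_lt by simp
    qed
  qed simp
  have inj: "inj_on length {u. (u, w) \<in> FA \<and> cls (length u) = j}"
  proof (rule inj_onI)
    fix u1 u2 assume u1: "u1 \<in> {u. (u, w) \<in> FA \<and> cls (length u) = j}" and u2: "u2 \<in> {u. (u, w) \<in> FA \<and> cls (length u) = j}"
      and l: "length u1 = length u2"
    have a1: "u1 = take (length u1) w" using FA_pred[of u1 w] u1 by blast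
    have a2: "u2 = take (length u2) w" using FA_pred[of u2 w] u2 by blast
    show "u1 = u2" using a1 a2 l by metis
  qed
  have sub: "length ` {u. (u, w) \<in> FA \<and> cls (length u) = j} \<subseteq> {i. gw w i \<noteq> None \<and> cls i = j}"
  proof
    fix i assume "i \<in> length ` {u. (u, w) \<in> FA \<and> cls (length u) = j}"
    then obtain u where "(u, w) \<in> FA" "cls (length u) = j" "i = length u" by auto
    then show "i \<in> {i. gw w i \<noteq> None \<and> cls i = j}" using FA_pred by auto
  qed
  have "card {u. (u, w) \<in> FA \<and> cls (length u) = j} = card (length ` {u. (u, w) \<in> FA \<and> cls (length u) = j})"
    using card_image[OF inj] by simp
  also have "\<dots> \<le> card {i. gw w i \<noteq> None \<and> cls i = j}" using card_mono[OF fin sub] .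
  finally show ?thesis .
qed

lemma colourable: "S_colourable (S_lambda (sum_list lam) lam) (sum_list lam) VV EE"
  unfolding S_colourable_def
proof (intro allI impI)
  fix \<sigma> assume sig: "signature (S_lambda (sum_list lam) lam) EE \<sigma>"
  define Sg where "Sg u w = \<sigma> (to_nat (u :: nat list), to_nat (w :: nat list))" for u w
  have SgS: "Sg u w \<in> S_lambda (sum_list lam) lam" if "(u, w) \<in> FA" for u w
  proof -
    have "(to_nat u, to_nat w) \<in> EE" using that by (force simp: EE_def LE_def)
    then show ?thesis using sig by (simp add: signature_def Sg_def)
  qed
  define Good where "Good m f \<longleftrightarrow> (\<forall>w\<in>Nodes. length w < m \<longrightarrow>
      f w \<in> block lam (cls (length w)) \<and> (\<forall>u. (u, w) \<in> FA \<longrightarrow> Sg u w (f u) \<noteq> f w))" for m f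
  have step: "\<exists>f. Good m f" for m
  proof (induction m)
    case 0 then show ?case by (simp add: Good_def)
  next
    case (Suc m)
    then obtain f where f: "Good m f" by blast
    have ex: "\<exists>col. col \<in> block lam (cls m) \<and> (\<forall>u. (u, w) \<in> FA \<longrightarrow> Sg u w (f u) \<noteq> col)"
      if w: "w \<in> Nodes" "length w = m" for w
    proof -
      define j where "j = cls m"
      define Forb where "Forb = (\<lambda>u. Sg u w (f u)) ` {u. (u, w) \<in> FA \<and> cls (length u) = j}"
      have finP: "finite {u. (u, w) \<in> FA \<and> cls (length u) = j}"
        by (rule finite_subset[OF _ finite_Nodes]) (use FA_nodes in blast)
      have finF: "finite Forb" unfolding Forb_def using finP by simp
      have "card Forb \<le> card {u. (u, w) \<in> FA \<and> cls (length u) = j}"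
        unfolding Forb_def using finP by (rule card_image_le)
      also have "\<dots> \<le> card {i. gw w i \<noteq> None \<and> cls i = j}" by (rule pred_card)
      also have "\<dots> < lam ! j" using gw[of w] w(2) unfolding Pgood_def j_def by simp
      also have "\<dots> = card (block lam j)" using block_card cls_lt by (simp add: j_def)
      finally have "card Forb < card (block lam j)" .
      then have "\<not> block lam j \<subseteq> Forb"
      proof (intro notI)
        assume "block lam j \<subseteq> Forb"
        then have "card (block lam j) \<le> card Forb" by (rule card_mono[OF finF])
        then show False using \<open>card Forb < card (block lam j)\<close> by simp
      qed
      then obtain col where col: "col \<in> block lam j" "col \<notin> Forb" by blast
      have "Sg u w (f u) \<noteq> col" if u: "(u, w) \<in> FA" for u
      proof (cases "cls (length u) = j")
        case True
        have "Sg u w (f u) \<in> Forb" unfolding Forb_def using u True by blast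
        then show ?thesis using col(2) by metis
      next
        case False
        have uN: "u \<in> Nodes" "length u < m" using FA_nodes[OF u] FA_pred[OF u] w(2) by auto
        then have fu: "f u \<in> block lam (cls (length u))" using f by (simp add: Good_def)
        have "Sg u w ` block lam (cls (length u)) = block lam (cls (length u))"
          using SgS[OF u] cls_lt by (simp add: S_lambda_def)
        then have "Sg u w (f u) \<in> block lam (cls (length u))" using fu by blast
        then show ?thesis using col(1) block_disj[OF False] by blast
      qed
      then show ?thesis using col(1) by (auto simp: j_def)
    qed
    define Q where "Q w col \<longleftrightarrow> col \<in> block lam (cls m) \<and> (\<forall>u. (u, w) \<in> FA \<longrightarrow> Sg u w (f u) \<noteq> col)" for w col
    define Ch where "Ch w = (SOME col. Q w col)" for w
    have Ch: "Q w (Ch w)" if "w \<in> Nodes" "length w = m" for w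
      unfolding Ch_def by (rule someI_ex) (use ex[OF that] in \<open>simp add: Q_def\<close>)
    define f' where "f' w = (if w \<in> Nodes \<and> length w = m then Ch w else f w)" for w
    have "Good (Suc m) f'" unfolding Good_def
    proof (intro ballI impI conjI allI)
      fix w assume w: "w \<in> Nodes" "length w < Suc m"
      have pre: "f' u = f u" if "(u, w) \<in> FA" for u
        using FA_pred[OF that] w by (auto simp: f'_def)
      show "f' w \<in> block lam (cls (length w))"
      proof (cases "length w = m")
        case True
        then have "f' w = Ch w" using w(1) by (simp add: f'_def)
        then show ?thesis using Ch[OF w(1) True] True unfolding Q_def by simp
      next
        case False then show ?thesis using f w by (simp add: f'_def Good_def)
      qed
      fix u assume u: "(u, w) \<in> FA"
      show "Sg u w (f' u) \<noteq> f' w"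
      proof (cases "length w = m")
        case True
        then have "f' w = Ch w" using w(1) by (simp add: f'_def)
        then show ?thesis using Ch[OF w(1) True] pre[OF u] u unfolding Q_def by simp
      next
        case False then show ?thesis using f w pre[OF u] u by (simp add: f'_def Good_def)
      qed
    qed
    then show ?case by blast
  qed
  obtain f where f: "Good DD f" using step by blast
  define F where "F x = f (from_nat x)" for x
  have Fw: "F (to_nat w) \<in> block lam (cls (length w))" if "w \<in> Nodes" for w
  proof -
    have "length w < DD" using that by (simp add: Nodes_def)
    then show ?thesis using f that unfolding Good_def F_def by simp
  qed
  have FA_ok: "\<sigma> (to_nat u, to_nat w) (F (to_nat u)) \<noteq> F (to_nat w)" if "(u, w) \<in> FA" for u w
  proof -
    have "w \<in> Nodes" using FA_nodes[OF that] by blast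
    moreover then have "length w < DD" by (simp add: Nodes_def)
    ultimately have "Sg u w (f u) \<noteq> f w" using f that unfolding Good_def by blast
    then show ?thesis by (simp add: F_def Sg_def)
  qed
  show "\<exists>F. colouring (sum_list lam) VV EE \<sigma> F"
  proof (intro exI[of _ F])
    show "colouring (sum_list lam) VV EE \<sigma> F" unfolding colouring_def
    proof (intro conjI ballI allI impI)
      fix v assume "v \<in> VV"
      then obtain w where w: "w \<in> Nodes" "v = to_nat w" by (auto simp: VV_def)
      then show "F v \<in> {1..sum_list lam}" using Fw[OF w(1)] block_sub[OF cls_lt] by blast
    next
      fix x y assume e: "(x, y) \<in> EE"
      then obtain u w where uw: "(u, w) \<in> LE" "x = to_nat u" "y = to_nat w" by (auto simp: EE_def)
      show "\<sigma> (x, y) (F x) \<noteq> F y"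
      proof (cases "(u, w) \<in> FA")
        case True then show ?thesis using FA_ok uw by simp
      next
        case False
        then have wu: "(w, u) \<in> FA" using uw(1) by (auto simp: LE_def)
        have e2: "(y, x) \<in> EE" using wu uw by (force simp: EE_def LE_def)
        have "\<sigma> (snd (y, x), fst (y, x)) = inv (\<sigma> (y, x))" using sig e2 unfolding signature_def by blast
        then have inv: "\<sigma> (x, y) = inv (\<sigma> (y, x))" by simp
        have P: "\<sigma> (y, x) permutes {1..sum_list lam}" using sig e2 by (simp add: signature_def S_lambda_def)
        have ne: "\<sigma> (y, x) (F y) \<noteq> F x" using FA_ok[OF wu] uw by simp
        show ?thesis
        proof
          assume "\<sigma> (x, y) (F x) = F y"
          then have "inv (\<sigma> (y, x)) (F x) = F y" using inv by simp
          then have "\<sigma> (y, x) (F y) = F x" using permutes_inv_eq[OF P] by blast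
          then show False using ne by simp
        qed
      qed
    qed
  qed
qed

lemma partB: "\<exists>V E. finite_graph V E \<and> S_colourable (S_lambda (sum_list lam) lam) (sum_list lam) V E \<and>
   \<not> S_colourable (S_lambda K lp) K V E"
  using graph colourable not_colourable by blast

end


theorem corollary17:
  assumes "is_partition k lam" and "is_partition k' lam'"
    and "0 < k" and "0 < k'"
  shows "(\<forall>V E. finite_graph V E \<longrightarrow>
            S_colourable (S_lambda k lam) k V E \<longrightarrow> S_colourable (S_lambda k' lam') k' V E)
         \<longleftrightarrow> partition_le k lam k' lam'"
proof
  assume le: "partition_le k lam k' lam'"
  then obtain h where h: "goodh lam lam' h" using le_imp_goodh by blast
  show "\<forall>V E. finite_graph V E \<longrightarrow>
            S_colourable (S_lambda k lam) k V E \<longrightarrow> S_colourable (S_lambda k' lam') k' V E"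
    using partA[OF assms(1,2) h] by blast
next
  assume all: "\<forall>V E. finite_graph V E \<longrightarrow>
            S_colourable (S_lambda k lam) k V E \<longrightarrow> S_colourable (S_lambda k' lam') k' V E"
  show "partition_le k lam k' lam'"
  proof (rule ccontr)
    assume nle: "\<not> partition_le k lam k' lam'"
    have noh: "\<forall>h. \<not> goodh lam lam' h" using goodh_imp_le[OF assms(1,2)] nle by blast
    have kk: "sum_list lam = k" "sum_list lam' = k'" using assms(1,2) by (auto simp: is_partition_def)
    have "lam \<noteq> []" using kk(1) assms(3) by auto
    moreover have "lam' \<noteq> []" using kk(2) assms(4) by auto
    ultimately have "PB lam lam'" using assms(1,2) noh
      by unfold_locales (auto simp: is_partition_def)
    then obtain V E where VE: "finite_graph V E" "S_colourable (S_lambda (sum_list lam) lam) (sum_list lam) V E"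
      "\<not> S_colourable (S_lambda (sum_list lam') lam') (sum_list lam') V E"
      using PB.partB by blast
    then show False using all kk by auto
  qed
qed

end
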